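(* Let $\alpha=(x,u')$ and $\beta=(y,v')$ be points of $\mathcal{S}$ with $x\neq y$, $u'\neq v'$, $u'\notin y'^{\perp}$ and $v'\notin x'^{\perp}$ (perps taken in $S'$). Then $|\{\alpha,\beta\}^{\perp}|\geq 3$ in $\mathcal{S}$.
   Context: Let $S=(P,L)$ and $S'=(P',L')$ be generalized quadrangles of order $(2,2)$ (every line has 3 points, every point lies on 3 lines, and for each point $x$ and line $l\not\ni x$ exactly one point of $l$ is collinear with $x$), with an isomorphism $x\mapsto x'$ from $S$ to $S'$. In a point-line geometry, $x^{\perp}$ is $x$ together with all points collinear with $x$, and $A^{\perp}=\bigcap_{a\in A}a^{\perp}$. A triad is a set of three pairwise non-collinear points, complete if $|T^{\perp}|=3$. The geometry $\mathcal{S}=(\mathcal{P},\mathcal{L})$ has point set $\mathcal{P}=\{(x,y')\in P\times P':y'\in x'^{\perp}\}$ and lines all $3$-subsets $\{(x,u'),(y,v'),(z,w')\}$ of $\mathcal{P}$ where $T=\{x,y,z\}$ (three distinct points) is a line or a complete triad of $S$ and $\{u',v',w'\}=T'^{\perp}$ in $S'$ with $u',v',w'$ distinct. *)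

theory Defs
  imports Main
begin

definition collinear :: "'a set set \<Rightarrow> 'a \<Rightarrow> 'a \<Rightarrow> bool" where
  "collinear L x y \<longleftrightarrow> (\<exists>l\<in>L. x \<in> l \<and> y \<in> l)"

definition perp :: "'a set \<Rightarrow> 'a set set \<Rightarrow> 'a \<Rightarrow> 'a set" where
  "perp P L x = {y \<in> P. y = x \<or> collinear L x y}"

definition setperp :: "'a set \<Rightarrow> 'a set set \<Rightarrow> 'a set \<Rightarrow> 'a set" where
  "setperp P L A = {y \<in> P. \<forall>a\<in>A. y \<in> perp P L a}"

definition GQ22 :: "'a set \<Rightarrow> 'a set set \<Rightarrow> bool" where
  "GQ22 P L \<longleftrightarrow>
     (\<forall>l\<in>L. l \<subseteq> P \<and> card l = 3) \<and>
     (\<forall>x\<in>P. card {l\<in>L. x \<in> l} = 3) \<and>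
     (\<forall>x\<in>P. \<forall>l\<in>L. x \<notin> l \<longrightarrow> (\<exists>!y. y \<in> l \<and> collinear L x y))"

definition isomorphism :: "'a set \<Rightarrow> 'a set set \<Rightarrow> 'b set \<Rightarrow> 'b set set \<Rightarrow> ('a \<Rightarrow> 'b) \<Rightarrow> bool" where
  "isomorphism P L P' L' f \<longleftrightarrow> bij_betw f P P' \<and> (\<lambda>l. f ` l) ` L = L'"

definition triad :: "'a set \<Rightarrow> 'a set set \<Rightarrow> 'a set \<Rightarrow> bool" where
  "triad P L T \<longleftrightarrow> T \<subseteq> P \<and> card T = 3 \<and>
     (\<forall>x\<in>T. \<forall>y\<in>T. x \<noteq> y \<longrightarrow> \<not> collinear L x y)"

definition complete_triad :: "'a set \<Rightarrow> 'a set set \<Rightarrow> 'a set \<Rightarrow> bool" where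
  "complete_triad P L T \<longleftrightarrow> triad P L T \<and> card (setperp P L T) = 3"

text \<open>The geometry \<open>\<S>\<close> built from S, S' and the isomorphism f.\<close>
definition bigP :: "'a set \<Rightarrow> 'b set \<Rightarrow> 'b set set \<Rightarrow> ('a \<Rightarrow> 'b) \<Rightarrow> ('a \<times> 'b) set" where
  "bigP P P' L' f = {(x, y'). x \<in> P \<and> y' \<in> P' \<and> y' \<in> perp P' L' (f x)}"

definition bigL :: "'a set \<Rightarrow> 'a set set \<Rightarrow> 'b set \<Rightarrow> 'b set set \<Rightarrow> ('a \<Rightarrow> 'b) \<Rightarrow> ('a \<times> 'b) set set" where
  "bigL P L P' L' f =
    {{(x, u'), (y, v'), (z, w')} | x u' y v' z w'.
       (x, u') \<in> bigP P P' L' f \<and> (y, v') \<in> bigP P P' L' f \<and> (z, w') \<in> bigP P P' L' f \<and>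
       x \<noteq> y \<and> y \<noteq> z \<and> x \<noteq> z \<and>
       ({x, y, z} \<in> L \<or> complete_triad P L {x, y, z}) \<and>
       {u', v', w'} = setperp P' L' (f ` {x, y, z}) \<and>
       u' \<noteq> v' \<and> v' \<noteq> w' \<and> u' \<noteq> w'}"

end

theory Submission
  imports Defs
begin

locale gq =
  fixes P :: "'a set" and L :: "'a set set"
  assumes G: "GQ22 P L"
begin

abbreviation col where "col \<equiv> collinear L"

lemma G1: "\<forall>l\<in>L. l \<subseteq> P \<and> card l = 3" using G unfolding GQ22_def by (rule conjunct1)
lemma G2: "\<forall>x\<in>P. card {l\<in>L. x \<in> l} = 3" using G unfolding GQ22_def by (rule conjunct1[OF conjunct2])
lemma G3: "\<forall>x\<in>P. \<forall>l\<in>L. x \<notin> l \<longrightarrow> (\<exists>!y. y \<in> l \<and> col x y)" using G unfolding GQ22_def by (rule conjunct2[OF conjunct2])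
lemma line_sub: "l \<in> L \<Longrightarrow> l \<subseteq> P" using G1 by blast
lemma line_card: "l \<in> L \<Longrightarrow> card l = 3" using G1 by blast
lemma pt_lines: "a \<in> P \<Longrightarrow> card {l\<in>L. a \<in> l} = 3" using G2 by blast
lemma ax: "a \<in> P \<Longrightarrow> l \<in> L \<Longrightarrow> a \<notin> l \<Longrightarrow> \<exists>!y. y \<in> l \<and> col a y"
  using G3 by blast

lemma line3: "l \<in> L \<Longrightarrow> \<exists>a b c. l = {a,b,c} \<and> a \<noteq> b \<and> b \<noteq> c \<and> a \<noteq> c"
proof -
  assume "l \<in> L"
  from line_card[OF this] show ?thesis unfolding card_3_iff .
qed

lemma col_sym: "col a b \<Longrightarrow> col b a" unfolding collinear_def by blast
lemma col_P: "col a b \<Longrightarrow> a \<in> P \<and> b \<in> P" unfolding collinear_def using line_sub by blast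
lemma col_I: "l \<in> L \<Longrightarrow> a \<in> l \<Longrightarrow> b \<in> l \<Longrightarrow> col a b" unfolding collinear_def by blast

lemma lines_through: "a \<in> P \<Longrightarrow> \<exists>l1 l2 l3. {l\<in>L. a \<in> l} = {l1,l2,l3} \<and> l1 \<noteq> l2 \<and> l2 \<noteq> l3 \<and> l1 \<noteq> l3"
proof -
  assume "a \<in> P"
  from pt_lines[OF this] show ?thesis unfolding card_3_iff .
qed

lemma col_refl: "a \<in> P \<Longrightarrow> col a a"
proof -
  assume "a \<in> P"
  then have c: "card {l\<in>L. a \<in> l} = 3" by (rule pt_lines)
  have "{l\<in>L. a \<in> l} \<noteq> {}"
  proof
    assume "{l\<in>L. a \<in> l} = {}"
    with c show False by simp
  qed
  then obtain l where "l \<in> L" "a \<in> l" by blast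
  then show ?thesis using col_I by blast
qed

lemma perp_iff: "a \<in> P \<Longrightarrow> y \<in> perp P L a \<longleftrightarrow> col a y"
proof -
  assume a: "a \<in> P"
  show ?thesis
  proof
    assume "y \<in> perp P L a"
    then have "y \<in> P" "y = a \<or> col a y" unfolding perp_def by auto
    then show "col a y" using col_refl by auto
  next
    assume "col a y"
    then show "y \<in> perp P L a" unfolding perp_def using col_P by simp
  qed
qed

lemma line_finite: "l \<in> L \<Longrightarrow> finite l"
  by (intro card_ge_0_finite) (simp add: line_card)

lemma uniq: assumes "a \<in> P" "l \<in> L" "a \<notin> l" "y \<in> l" "col a y" "z \<in> l" "col a z"
  shows "y = z"
proof -
  have "\<exists>!y. y \<in> l \<and> col a y" using ax assms(1,2,3) .
  then show ?thesis using assms(4-7) by (metis (no_types, lifting))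
qed

lemma two_lines: assumes "l \<in> L" "m \<in> L" "a \<noteq> b" "a \<in> l" "b \<in> l" "a \<in> m" "b \<in> m"
  shows "l = m"
proof (rule ccontr)
  assume "l \<noteq> m"
  have "finite l" "card l = card m" using assms line_card line_finite by auto
  then have "\<not> m \<subseteq> l" using \<open>l \<noteq> m\<close> card_subset_eq by metis
  then obtain c where c: "c \<in> m" "c \<notin> l" by blast
  then have "c \<in> P" using line_sub assms by blast
  moreover have "col c a" "col c b" using col_I assms c by blast+
  ultimately show False using uniq[of c l a b] assms c by blast
qed

lemma tri: assumes "l \<in> L" "a \<in> l" "b \<in> l" "a \<noteq> b" "col c a" "col c b" shows "c \<in> l"
proof (rule ccontr)
  assume "c \<notin> l"
  have "c \<in> P" using col_P assms by blast
  then show False using uniq[of c l a b] assms \<open>c \<notin> l\<close> by blast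
qed

lemma third: assumes "l \<in> L" "a \<in> l" "b \<in> l" "a \<noteq> b" shows "\<exists>c. l = {a,b,c} \<and> c \<noteq> a \<and> c \<noteq> b"
proof -
  have "card (l - {a,b}) = card l - card {a,b}"
    using assms by (intro card_Diff_subset) auto
  also have "\<dots> = 1" using assms line_card by simp
  finally obtain c where c: "l - {a,b} = {c}" by (auto simp: card_1_singleton_iff)
  then have "l = {a,b,c}" using assms(2,3) by blast
  moreover have "c \<noteq> a \<and> c \<noteq> b" using c by blast
  ultimately show ?thesis by blast
qed

lemma lines_through':
  assumes "a \<in> P"
  obtains l1 l2 l3 where "l1\<in>L" "l2\<in>L" "l3\<in>L" "a\<in>l1" "a\<in>l2" "a\<in>l3"
    "l1\<noteq>l2" "l2\<noteq>l3" "l1\<noteq>l3" "\<And>l. l\<in>L \<Longrightarrow> a\<in>l \<Longrightarrow> l=l1 \<or> l=l2 \<or> l=l3"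
proof -
  obtain l1 l2 l3 where e: "{l\<in>L. a \<in> l} = {l1,l2,l3}" and d: "l1\<noteq>l2" "l2\<noteq>l3" "l1\<noteq>l3"
    using lines_through[OF assms] by blast
  have m: "l1 \<in> {l\<in>L. a \<in> l}" "l2 \<in> {l\<in>L. a \<in> l}" "l3 \<in> {l\<in>L. a \<in> l}" by (simp_all only: e) simp_all
  have o: "l=l1 \<or> l=l2 \<or> l=l3" if "l\<in>L" "a\<in>l" for l
  proof -
    have "l \<in> {l\<in>L. a \<in> l}" using that by simp
    then have "l \<in> {l1,l2,l3}" by (simp only: e)
    then show ?thesis by simp
  qed
  show ?thesis by (rule that[of l1 l2 l3]) (use m d o in auto)
qed

lemma no4: assumes "a \<in> P" "m1\<in>L" "m2\<in>L" "m3\<in>L" "m4\<in>L" "a\<in>m1" "a\<in>m2" "a\<in>m3" "a\<in>m4"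
  "m1\<noteq>m2" "m1\<noteq>m3" "m1\<noteq>m4" "m2\<noteq>m3" "m2\<noteq>m4" "m3\<noteq>m4" shows False
proof -
  have c: "card {l\<in>L. a \<in> l} = 3" using pt_lines assms(1) by blast
  then have f: "finite {l\<in>L. a \<in> l}" by (intro card_ge_0_finite) simp
  have "{m1,m2,m3,m4} \<subseteq> {l\<in>L. a \<in> l}" using assms by simp
  then have "card {m1,m2,m3,m4} \<le> 3" using card_mono[OF f] c by metis
  moreover have "card {m1,m2,m3,m4} = 4" using assms(10-15) by simp
  ultimately show False by simp
qed

lemma other_line: assumes "a \<in> P" "m1\<in>L" "m2\<in>L" "a\<in>m1" "a\<in>m2"
  obtains m where "m \<in> L" "a \<in> m" "m \<noteq> m1" "m \<noteq> m2"
proof -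
  have c: "card {l\<in>L. a \<in> l} = 3" using pt_lines assms(1) by blast
  then have f: "finite {l\<in>L. a \<in> l}" by (intro card_ge_0_finite) simp
  have "card ({l\<in>L. a \<in> l} - {m1,m2}) \<ge> card {l\<in>L. a \<in> l} - card {m1,m2}"
    by (rule diff_card_le_card_Diff) simp
  moreover have "card {m1,m2} \<le> 2" by (simp add: card_insert_if)
  ultimately have "card ({l\<in>L. a \<in> l} - {m1,m2}) > 0" using c by linarith
  then have "{l\<in>L. a \<in> l} - {m1,m2} \<noteq> {}" by (metis card.empty less_irrefl)
  then obtain m where "m \<in> {l\<in>L. a \<in> l} - {m1,m2}" by blast
  then have "m \<in> L" "a \<in> m" "m \<noteq> m1" "m \<noteq> m2" by simp_all
  then show ?thesis by (rule that)
qed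

lemma col_line: assumes "col a b" obtains l where "l \<in> L" "a \<in> l" "b \<in> l"
  using assms unfolding collinear_def by blast

lemma pick: assumes "a \<in> P" "l \<in> L" "a \<notin> l" obtains y where "y \<in> l" "col a y"
  using ax[OF assms] by blast

lemma notcol: assumes "la \<in> L" "m \<in> L" "a \<in> la" "a \<in> m" "la \<noteq> m" "X \<in> la" "X \<noteq> a" "s \<in> m" "s \<noteq> a"
  shows "\<not> col X s"
proof
  assume "col X s"
  then have "col s X" by (rule col_sym)
  moreover have "col s a" using col_I[OF assms(2,8,4)] .
  ultimately have "s \<in> la" using tri[OF assms(1,3,6)] assms(7) by metis
  then show False using two_lines[OF assms(1,2) assms(9)[symmetric] assms(3)] assms(4,8,5) by blast
qed

lemma perp_nc: assumes "col X a" "col Z a" "col X b" "col Z b" "a \<noteq> b" "\<not> col X Z"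
  shows "\<not> col a b"
proof
  assume "col a b"
  then obtain l where l: "l \<in> L" "a \<in> l" "b \<in> l" by (rule col_line)
  have "X \<in> l" using tri[OF l assms(5)] assms(1,3) col_sym by metis
  moreover have "Z \<in> l" using tri[OF l assms(5)] assms(2,4) col_sym by metis
  ultimately show False using assms(6) col_I l(1) by metis
qed

lemma perp2_3: assumes X: "X \<in> P" and Z: "Z \<in> P" and nc: "\<not> col X Z"
  shows "\<exists>a b c. a\<noteq>b \<and> b\<noteq>c \<and> a\<noteq>c \<and> (\<forall>w. (col X w \<and> col Z w) \<longleftrightarrow> (w = a \<or> w = b \<or> w = c))"
proof -
  obtain l1 l2 l3 where L: "l1\<in>L" "l2\<in>L" "l3\<in>L" "X\<in>l1" "X\<in>l2" "X\<in>l3"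
    "l1\<noteq>l2" "l2\<noteq>l3" "l1\<noteq>l3" and o: "\<And>l. l\<in>L \<Longrightarrow> X\<in>l \<Longrightarrow> l=l1 \<or> l=l2 \<or> l=l3"
    using lines_through'[OF X] by blast
  have nZ: "Z \<notin> l" if "l \<in> L" "X \<in> l" for l
  proof
    assume "Z \<in> l" then have "col X Z" by (rule col_I[OF that])
    then show False using nc by simp
  qed
  obtain a where a: "a \<in> l1" "col Z a" by (rule pick[OF Z L(1) nZ[OF L(1,4)]])
  obtain b where b: "b \<in> l2" "col Z b" by (rule pick[OF Z L(2) nZ[OF L(2,5)]])
  obtain c where c: "c \<in> l3" "col Z c" by (rule pick[OF Z L(3) nZ[OF L(3,6)]])
  have aX: "X \<noteq> a" "X \<noteq> b" "X \<noteq> c" using a(2) b(2) c(2) nc col_sym by blast+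
  have ab: "a \<noteq> b"
  proof
    assume "a = b" then have "a \<in> l2" using b by simp
    then show False using two_lines[OF L(1,2) aX(1) L(4) a(1) L(5)] L(7) by simp
  qed
  have bc: "b \<noteq> c"
  proof
    assume "b = c" then have "b \<in> l3" using c by simp
    then show False using two_lines[OF L(2,3) aX(2) L(5) b(1) L(6)] L(8) by simp
  qed
  have ac: "a \<noteq> c"
  proof
    assume "a = c" then have "a \<in> l3" using c by simp
    then show False using two_lines[OF L(1,3) aX(1) L(4) a(1) L(6)] L(9) by simp
  qed
  have ch: "(col X w \<and> col Z w) \<longleftrightarrow> (w = a \<or> w = b \<or> w = c)" for w
  proof
    assume w: "col X w \<and> col Z w"
    then have "col X w" by simp
    then obtain l where l: "l \<in> L" "X \<in> l" "w \<in> l" by (rule col_line)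
    have u: "w = y" if "l = l'" "l' \<in> L" "y \<in> l'" "col Z y" for l' y
      using uniq[OF Z l(1) nZ[OF l(1,2)] l(3)] w that by simp
    have "l = l1 \<or> l = l2 \<or> l = l3" using o l by metis
    then show "w = a \<or> w = b \<or> w = c"
    proof (elim disjE)
      assume "l = l1" then show ?thesis using u[OF _ L(1) a] by simp
    next
      assume "l = l2" then show ?thesis using u[OF _ L(2) b] by simp
    next
      assume "l = l3" then show ?thesis using u[OF _ L(3) c] by simp
    qed
  next
    assume "w = a \<or> w = b \<or> w = c"
    moreover have "col X a" "col X b" "col X c" using col_I L a b c by blast+
    ultimately show "col X w \<and> col Z w" using a b c by blast
  qed
  show ?thesis using ab bc ac ch by blast
qed

lemma col_line_ne: assumes "col a b" "a \<noteq> b" obtains l where "l \<in> L" "a \<in> l" "b \<in> l"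
  using assms(1) by (rule col_line)

lemma third_pt: assumes "l \<in> L" "a \<in> l" "b \<in> l" "a \<noteq> b"
  obtains c where "l = {a,b,c}" "c \<noteq> a" "c \<noteq> b"
  using third[OF assms] by blast

lemma regular:
  assumes X: "X \<in> P" and Z: "Z \<in> P" and nc: "\<not> col X Z"
  shows "\<exists>T\<in>P. \<not> col X T \<and> \<not> col Z T \<and> (\<forall>w. col X w \<and> col Z w \<longrightarrow> col T w)"
proof -
  obtain a b c where ab: "a\<noteq>b" and bc: "b\<noteq>c" and ac: "a\<noteq>c"
    and ch: "\<And>w. (col X w \<and> col Z w) \<longleftrightarrow> (w = a \<or> w = b \<or> w = c)"
    using perp2_3[OF X Z nc] by blast
  have ca: "col X a" "col Z a" using ch[of a] by simp_all
  have cb: "col X b" "col Z b" using ch[of b] by simp_all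
  have cc: "col X c" "col Z c" using ch[of c] by simp_all
  have ncab: "\<not> col a b" by (rule perp_nc[OF ca cb ab nc])
  have ncac: "\<not> col a c" by (rule perp_nc[OF ca cc ac nc])
  have ncbc: "\<not> col b c" by (rule perp_nc[OF cb cc bc nc])
  have aP: "a \<in> P" and bP: "b \<in> P" and cP: "c \<in> P" using ca cb cc col_P by blast+
  have Xa: "X \<noteq> a" using ca(2) nc col_sym by blast
  have Za: "Z \<noteq> a" using ca(1) nc by blast
  have Xb: "X \<noteq> b" using cb(2) nc col_sym by blast
  have XZ: "X \<noteq> Z" using nc col_refl X by blast
  obtain la where la: "la \<in> L" "X \<in> la" "a \<in> la" using ca(1) by (rule col_line)
  obtain lz where lz: "lz \<in> L" "Z \<in> lz" "a \<in> lz" using ca(2) by (rule col_line)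
  have lalz: "la \<noteq> lz" using la lz nc col_I by blast
  obtain l3 where l3: "l3 \<in> L" "a \<in> l3" "l3 \<noteq> la" "l3 \<noteq> lz"
    using other_line[OF aP la(1) lz(1) la(3) lz(3)] by blast
  have bl3: "b \<notin> l3" using ncab col_I l3 by blast
  obtain t where t: "t \<in> l3" "col b t" by (rule pick[OF bP l3(1) bl3])
  have ta: "t \<noteq> a" using t(2) ncab col_sym by blast
  have tP: "t \<in> P" using t(2) col_P by blast
  have ntX: "\<not> col X t" by (rule notcol[OF la(1) l3(1) la(3) l3(2) l3(3)[symmetric] la(2) Xa t(1) ta])
  have ntZ: "\<not> col Z t" by (rule notcol[OF lz(1) l3(1) lz(3) l3(2) l3(4)[symmetric] lz(2) Za t(1) ta])
  have tc: "col t c"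
  proof (rule ccontr)
    assume ntc: "\<not> col t c"
    have cl3: "c \<notin> l3" using ncac col_I l3 by blast
    obtain a3 where a3: "l3 = {a,t,a3}" "a3 \<noteq> a" "a3 \<noteq> t" by (rule third_pt[OF l3(1) l3(2) t(1) ta[symmetric]])
    obtain y where y: "y \<in> l3" "col c y" by (rule pick[OF cP l3(1) cl3])
    have "y \<noteq> a" using y(2) ncac col_sym by blast
    moreover have "y \<noteq> t" using y(2) ntc col_sym by blast
    ultimately have "y = a3" using y(1) a3(1) by blast
    then have ca3: "col c a3" using y by simp
    have a3l3: "a3 \<in> l3" using a3(1) by simp
    obtain lb where lb: "lb \<in> L" "b \<in> lb" "t \<in> lb" using t(2) by (rule col_line)
    have tb: "t \<noteq> b" using t(1) bl3 by blast
    have clb: "c \<notin> lb" using ncbc col_I lb by blast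
    obtain b3 where b3: "lb = {b,t,b3}" "b3 \<noteq> b" "b3 \<noteq> t" by (rule third_pt[OF lb(1) lb(2) lb(3) tb[symmetric]])
    obtain y2 where y2: "y2 \<in> lb" "col c y2" by (rule pick[OF cP lb(1) clb])
    have "y2 \<noteq> b" using y2(2) ncbc col_sym by blast
    moreover have "y2 \<noteq> t" using y2(2) ntc col_sym by blast
    ultimately have "y2 = b3" using y2(1) b3(1) by blast
    then have cb3: "col c b3" using y2 by simp
    have b3lb: "b3 \<in> lb" using b3(1) by simp
    have l3lb: "l3 \<noteq> lb" using lb(2) bl3 by blast
    have nab3: "\<not> col a3 b3"
    proof
      assume "col a3 b3"
      moreover have "col a3 t" using col_I[OF l3(1) a3l3 t(1)] .
      ultimately have "a3 \<in> lb" using tri[OF lb(1) lb(3) b3lb b3(3)[symmetric]] by blast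
      then show False using two_lines[OF l3(1) lb(1) a3(3)[symmetric] t(1) a3l3 lb(3)] l3lb by blast
    qed
    obtain lX where lX: "lX \<in> L" "c \<in> lX" "X \<in> lX" using col_sym[OF cc(1)] by (rule col_line)
    obtain lZ where lZ: "lZ \<in> L" "c \<in> lZ" "Z \<in> lZ" using col_sym[OF cc(2)] by (rule col_line)
    obtain m1 where m1: "m1 \<in> L" "c \<in> m1" "a3 \<in> m1" using ca3 by (rule col_line)
    obtain m2 where m2: "m2 \<in> L" "c \<in> m2" "b3 \<in> m2" using cb3 by (rule col_line)
    have nXa3: "\<not> col X a3" by (rule notcol[OF la(1) l3(1) la(3) l3(2) l3(3)[symmetric] la(2) Xa a3l3 a3(2)])
    have nZa3: "\<not> col Z a3" by (rule notcol[OF lz(1) l3(1) lz(3) l3(2) l3(4)[symmetric] lz(2) Za a3l3 a3(2)])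
    obtain lbX where lbX: "lbX \<in> L" "b \<in> lbX" "X \<in> lbX" using col_sym[OF cb(1)] by (rule col_line)
    obtain lbZ where lbZ: "lbZ \<in> L" "b \<in> lbZ" "Z \<in> lbZ" using col_sym[OF cb(2)] by (rule col_line)
    have Zb: "Z \<noteq> b" using cb(1) nc by blast
    have lbXlb: "lbX \<noteq> lb" using ntX col_I lbX lb by blast
    have lbZlb: "lbZ \<noteq> lb" using ntZ col_I lbZ lb by blast
    have nXb3: "\<not> col X b3" by (rule notcol[OF lbX(1) lb(1) lbX(2) lb(2) lbXlb lbX(3) Xb b3lb b3(2)])
    have nZb3: "\<not> col Z b3" by (rule notcol[OF lbZ(1) lb(1) lbZ(2) lb(2) lbZlb lbZ(3) Zb b3lb b3(2)])
    have "lX \<noteq> lZ" using lX lZ nc col_I by blast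
    moreover have "m1 \<noteq> m2" using m1 m2 nab3 col_I by blast
    moreover have "m1 \<noteq> lX" using m1 lX nXa3 col_I by blast
    moreover have "m1 \<noteq> lZ" using m1 lZ nZa3 col_I by blast
    moreover have "m2 \<noteq> lX" using m2 lX nXb3 col_I by blast
    moreover have "m2 \<noteq> lZ" using m2 lZ nZb3 col_I by blast
    ultimately show False using no4[OF cP lX(1) lZ(1) m1(1) m2(1) lX(2) lZ(2) m1(2) m2(2)] by blast
  qed
  have "\<forall>w. col X w \<and> col Z w \<longrightarrow> col t w"
  proof (intro allI impI)
    fix w assume "col X w \<and> col Z w"
    then have "w = a \<or> w = b \<or> w = c" using ch by blast
    then show "col t w" using tc col_sym t(2) col_I[OF l3(1) t(1) l3(2)] by blast
  qed
  then show ?thesis using tP ntX ntZ by blast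
qed

lemma triad_center:
  assumes uP: "u \<in> P" and vP: "v \<in> P" and cP: "c \<in> P"
    and nuv: "\<not> col u v" and nuc: "\<not> col u c" and nvc: "\<not> col v c"
  shows "\<exists>Z. col Z u \<and> col Z v \<and> col Z c"
proof (rule ccontr)
  assume H: "\<not> (\<exists>Z. col Z u \<and> col Z v \<and> col Z c)"
  obtain l1 l2 l3 where L: "l1\<in>L" "l2\<in>L" "l3\<in>L" "c\<in>l1" "c\<in>l2" "c\<in>l3"
    "l1\<noteq>l2" "l2\<noteq>l3" "l1\<noteq>l3" and "\<And>l. l\<in>L \<Longrightarrow> c\<in>l \<Longrightarrow> l=l1 \<or> l=l2 \<or> l=l3"
    using lines_through'[OF cP] by blast
  have nu: "u \<notin> l" if "l \<in> L" "c \<in> l" for l using nuc col_I that by blast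
  have nv: "v \<notin> l" if "l \<in> L" "c \<in> l" for l using nvc col_I that by blast
  obtain a1 where a1: "a1 \<in> l1" "col u a1" by (rule pick[OF uP L(1) nu[OF L(1,4)]])
  obtain a2 where a2: "a2 \<in> l2" "col u a2" by (rule pick[OF uP L(2) nu[OF L(2,5)]])
  obtain a3 where a3: "a3 \<in> l3" "col u a3" by (rule pick[OF uP L(3) nu[OF L(3,6)]])
  obtain b2 where b2: "b2 \<in> l2" "col v b2" by (rule pick[OF vP L(2) nv[OF L(2,5)]])
  obtain b3 where b3: "b3 \<in> l3" "col v b3" by (rule pick[OF vP L(3) nv[OF L(3,6)]])
  have a1c: "a1 \<noteq> c" using a1 nuc by blast
  have nc: "b \<noteq> a" if "l \<in> L" "c \<in> l" "a \<in> l" "col u a" "col v b" for l a b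
  proof
    assume "b = a"
    then have "col a u \<and> col a v \<and> col a c" using that col_sym col_I by blast
    then show False using H by blast
  qed
  obtain m1 where m1: "m1 \<in> L" "u \<in> m1" "a1 \<in> m1" using a1(2) by (rule col_line)
  have vm1: "v \<notin> m1" using nuv col_I m1 by blast
  obtain d1 where d1: "d1 \<in> m1" "col v d1" by (rule pick[OF vP m1(1) vm1])
  have d1u: "d1 \<noteq> u" using d1(2) nuv col_sym by blast
  have d1a1: "d1 \<noteq> a1" using nc[OF L(1,4) a1(1) a1(2)] d1(2) by blast
  have cm1: "c \<notin> m1" using nuc col_I m1 by blast
  have nd1c: "\<not> col d1 c"
  proof
    assume "col d1 c"
    moreover have "col d1 a1" using col_I[OF m1(1) d1(1) m1(3)] .
    ultimately have "d1 \<in> l1" using tri[OF L(1) L(4) a1(1) a1c[symmetric]] by blast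
    then have "l1 = m1" using two_lines[OF L(1) m1(1) d1a1[symmetric] a1(1) _ m1(3) d1(1)] by blast
    then show False using nu[OF L(1,4)] m1(2) by blast
  qed
  have key: "col d1 b" if l: "l \<in> L" "c \<in> l" "l \<noteq> l1" and a: "a \<in> l" "col u a"
      and b: "b \<in> l" "col v b" for l a b
  proof -
    have ac: "a \<noteq> c" using a nuc by blast
    have bc: "b \<noteq> c" using b nvc by blast
    have ba: "b \<noteq> a" by (rule nc[OF l(1,2) a b(2)])
    obtain x where x: "l = {c,a,x}" "x \<noteq> c" "x \<noteq> a" by (rule third_pt[OF l(1) l(2) a(1) ac[symmetric]])
    have bx: "b = x" using b(1) x bc ba by blast
    have d1l: "d1 \<notin> l" using nd1c col_I l by blast
    have d1P: "d1 \<in> P" using d1(2) col_P by blast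
    obtain y where y: "y \<in> l" "col d1 y" by (rule pick[OF d1P l(1) d1l])
    have yc: "y \<noteq> c" using y nd1c by blast
    have ya: "y \<noteq> a"
    proof
      assume ya: "y = a"
      have a1a: "a1 \<noteq> a"
      proof
        assume "a1 = a" then have "a1 \<in> l" using a(1) by simp
        then show False using two_lines[OF L(1) l(1) a1c[symmetric] L(4) a1(1) l(2)] l(3) by simp
      qed
      have "a \<in> m1" using tri[OF m1(1) m1(2) d1(1) d1u[symmetric]] a(2) y(2) ya col_sym by blast
      then have "col a a1" using col_I[OF m1(1)] m1(3) by blast
      moreover have "col a c" using col_I[OF l(1) a(1) l(2)] .
      ultimately have "a \<in> l1" using tri[OF L(1) L(4) a1(1) a1c[symmetric]] by blast
      then have "l1 = l" using two_lines[OF L(1) l(1) ac[symmetric] L(4) _ l(2) a(1)] by blast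
      then show False using l(3) by simp
    qed
    have "y = b" using y(1) x(1) bx yc ya by blast
    then show ?thesis using y by simp
  qed
  have k2: "col d1 b2" by (rule key[OF L(2) L(5) L(7)[symmetric] a2 b2])
  have k3: "col d1 b3" by (rule key[OF L(3) L(6) L(9)[symmetric] a3 b3])
  have vd1: "v \<noteq> d1" using vm1 d1(1) by blast
  obtain n where n: "n \<in> L" "v \<in> n" "d1 \<in> n" using d1(2) by (rule col_line)
  have b2n: "b2 \<in> n" using tri[OF n(1) n(2) n(3) vd1] b2(2) k2 col_sym by blast
  have b3n: "b3 \<in> n" using tri[OF n(1) n(2) n(3) vd1] b3(2) k3 col_sym by blast
  have b2c: "b2 \<noteq> c" using b2 nvc by blast
  have b3c: "b3 \<noteq> c" using b3 nvc by blast
  have b23: "b2 \<noteq> b3"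
  proof
    assume "b2 = b3" then have "b2 \<in> l3" using b3(1) by simp
    then show False using two_lines[OF L(2) L(3) b2c[symmetric] L(5) b2(1) L(6)] L(8) by simp
  qed
  have "col b3 b2" using col_I[OF n(1) b3n b2n] .
  moreover have "col b3 c" using col_I[OF L(3) b3(1) L(6)] .
  ultimately have "b3 \<in> l2" using tri[OF L(2) L(5) b2(1) b2c[symmetric]] by blast
  then show False using two_lines[OF L(2) L(3) b3c[symmetric] L(5) _ L(6) b3(1)] L(8) by blast
qed

lemma center_pair:
  assumes pP: "p \<in> P" and qP: "q \<in> P" and rP: "r \<in> P" and pq: "col p q"
  shows "\<exists>Z. col Z p \<and> col Z q \<and> col Z r"
proof (cases "col p r")
  case True then show ?thesis using pq col_refl[OF pP] by blast
next
  case npr: False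
  show ?thesis
  proof (cases "col q r")
    case True then show ?thesis using pq col_sym col_refl[OF qP] by blast
  next
    case nqr: False
    obtain l where l: "l \<in> L" "p \<in> l" "q \<in> l" using pq by (rule col_line)
    have "r \<notin> l" using npr col_I l by blast
    then obtain z where z: "z \<in> l" "col r z" using pick[OF rP l(1)] by blast
    then show ?thesis using col_I[OF l(1) z(1)] l col_sym by blast
  qed
qed

lemma center_all:
  assumes pP: "p \<in> P" and qP: "q \<in> P" and rP: "r \<in> P"
  shows "\<exists>Z. col Z p \<and> col Z q \<and> col Z r"
proof (cases "col p q")
  case True then show ?thesis using center_pair[OF pP qP rP] by blast
next
  case npq: False
  show ?thesis
  proof (cases "col p r")
    case True then show ?thesis using center_pair[OF pP rP qP] by blast
  next
    case npr: False
    show ?thesis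
    proof (cases "col q r")
      case True then show ?thesis using center_pair[OF qP rP pP] by blast
    next
      case False then show ?thesis using triad_center[OF pP qP rP npq npr] by blast
    qed
  qed
qed

lemma three_common:
  assumes X: "X \<in> P" and Y: "Y \<in> P" and XY: "X \<noteq> Y"
  shows "\<exists>a b c. a\<noteq>b \<and> b\<noteq>c \<and> a\<noteq>c \<and> col X a \<and> col Y a \<and> col X b \<and> col Y b \<and> col X c \<and> col Y c"
proof (cases "col X Y")
  case True
  obtain l where l: "l \<in> L" "X \<in> l" "Y \<in> l" using True by (rule col_line)
  obtain t where t: "l = {X,Y,t}" "t \<noteq> X" "t \<noteq> Y" by (rule third_pt[OF l XY])
  have "t \<in> l" using t(1) by simp
  then show ?thesis using t XY col_I[OF l(1)] l by blast
next
  case False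
  then show ?thesis using perp2_3[OF X Y False] by blast
qed

lemma lines_at_finite: "w \<in> P \<Longrightarrow> finite {l\<in>L. w \<in> l}"
  using pt_lines by (intro card_ge_0_finite) simp

lemma finite_P: assumes x: "x \<in> P" shows "finite P"
proof -
  define W where "W = {w. col x w}"
  have W: "W \<subseteq> \<Union> {l\<in>L. x \<in> l}"
  proof
    fix w assume "w \<in> W" then have "col x w" unfolding W_def by simp
    then obtain l where "l \<in> L" "x \<in> l" "w \<in> l" by (rule col_line)
    then show "w \<in> \<Union> {l\<in>L. x \<in> l}" by blast
  qed
  have fW: "finite W"
    by (rule finite_subset[OF W]) (use lines_at_finite[OF x] line_finite in auto)
  have WP: "W \<subseteq> P" unfolding W_def using col_P by blast
  have fU: "finite (\<Union>w\<in>W. {l\<in>L. w \<in> l})" using fW WP lines_at_finite by blast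
  have "P \<subseteq> \<Union> (\<Union>w\<in>W. {l\<in>L. w \<in> l})"
  proof
    fix z assume z: "z \<in> P"
    obtain l where l: "l \<in> L" "z \<in> l" "z \<in> l" using col_refl[OF z] by (rule col_line)
    have "\<exists>w. col x w \<and> w \<in> l"
    proof (cases "x \<in> l")
      case True then show ?thesis using col_refl[OF x] by blast
    next
      case False then show ?thesis using pick[OF x l(1)] by blast
    qed
    then show "z \<in> \<Union> (\<Union>w\<in>W. {l\<in>L. w \<in> l})" using l unfolding W_def by blast
  qed
  moreover have "finite (\<Union> (\<Union>w\<in>W. {l\<in>L. w \<in> l}))"
    by (rule finite_Union[OF fU]) (use line_finite in auto)
  ultimately show ?thesis by (rule finite_subset)
qed

lemma setperp_line: assumes l: "l \<in> L" shows "setperp P L l = l"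
proof
  show "setperp P L l \<subseteq> l"
  proof
    fix w assume w: "w \<in> setperp P L l"
    obtain a b c where abc: "l = {a,b,c}" "a \<noteq> b" "b \<noteq> c" "a \<noteq> c" using line3[OF l] by blast
    have aP: "a \<in> P" "b \<in> P" using abc(1) line_sub[OF l] by auto
    have "w \<in> perp P L a" "w \<in> perp P L b" using w abc(1) unfolding setperp_def by auto
    then have "col a w" "col b w" using perp_iff aP by blast+
    then show "w \<in> l" using tri[OF l _ _ abc(2)] abc(1) col_sym by blast
  qed
next
  show "l \<subseteq> setperp P L l"
  proof
    fix w assume w: "w \<in> l"
    have "w \<in> P" using w line_sub[OF l] by blast
    moreover have "w \<in> perp P L a" if "a \<in> l" for a
      using perp_iff[of a w] that w col_I[OF l] line_sub[OF l] by blast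
    ultimately show "w \<in> setperp P L l" unfolding setperp_def by blast
  qed
qed

end

lemma rest3: assumes "card S = 3" "p \<in> S" "q \<in> S" "p \<noteq> q"
  shows "\<exists>r. S = {p,q,r} \<and> r \<noteq> p \<and> r \<noteq> q"
proof -
  have "card (S - {p,q}) = card S - card {p,q}"
    using assms by (intro card_Diff_subset) auto
  also have "\<dots> = 1" using assms by simp
  finally obtain r where c: "S - {p,q} = {r}" by (auto simp: card_1_singleton_iff)
  then have "S = {p,q,r}" using assms(2,3) by blast
  moreover have "r \<noteq> p \<and> r \<noteq> q" using c by blast
  ultimately show ?thesis by blast
qed

locale two = S: gq P L + T: gq P' L' for P :: "'a set" and L and P' :: "'b set" and L' +
  fixes f :: "'a \<Rightarrow> 'b" assumes iso: "isomorphism P L P' L' f"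
begin

lemma bij: "bij_betw f P P'" using iso unfolding isomorphism_def by blast
lemma inj: "inj_on f P" using bij by (simp add: bij_betw_def)
lemma img: "f ` P = P'" using bij by (simp add: bij_betw_def)
lemma limg: "(\<lambda>l. f ` l) ` L = L'" using iso by (simp add: isomorphism_def)
lemma fP: "a \<in> P \<Longrightarrow> f a \<in> P'" using img by (metis imageI)
lemma preim: assumes "b \<in> P'" obtains a where "a \<in> P" "f a = b"
proof -
  have "b \<in> f ` P" using assms img by simp
  then show ?thesis using that by (elim imageE) simp
qed

lemma col_iff: assumes "a \<in> P" "b \<in> P" shows "T.col (f a) (f b) \<longleftrightarrow> S.col a b"
proof
  assume "S.col a b"
  then obtain l where "l \<in> L" "a \<in> l" "b \<in> l" by (rule S.col_line)
  moreover have "f ` l \<in> L'" using limg \<open>l \<in> L\<close> by (metis imageI)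
  ultimately show "T.col (f a) (f b)" using T.col_I by blast
next
  assume "T.col (f a) (f b)"
  then obtain l' where l': "l' \<in> L'" "f a \<in> l'" "f b \<in> l'" by (rule T.col_line)
  then have "l' \<in> (\<lambda>l. f ` l) ` L" using limg by simp
  then obtain l where l: "l' = f ` l" "l \<in> L" by (rule imageE)
  have lP: "l \<subseteq> P" using S.line_sub l(2) by blast
  have "f a \<in> f ` l" using l' l by simp
  then obtain a0 where a0: "f a = f a0" "a0 \<in> l" by (rule imageE)
  have "a0 \<in> P" using a0 lP by blast
  then have "a = a0" using inj_onD[OF inj a0(1) assms(1)] by simp
  have "f b \<in> f ` l" using l' l by simp
  then obtain b0 where b0: "f b = f b0" "b0 \<in> l" by (rule imageE)
  have "b0 \<in> P" using b0 lP by blast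
  then have "b = b0" using inj_onD[OF inj b0(1) assms(2)] by simp
  show "S.col a b" using S.col_I[OF l(2)] a0 b0 \<open>a = a0\<close> \<open>b = b0\<close> by simp
qed

lemma setperp_tr: assumes A: "A \<subseteq> P" shows "setperp P' L' (f ` A) = f ` setperp P L A"
proof
  show "setperp P' L' (f ` A) \<subseteq> f ` setperp P L A"
  proof
    fix w assume w: "w \<in> setperp P' L' (f ` A)"
    then have "w \<in> P'" unfolding setperp_def by blast
    then obtain y where y: "y \<in> P" "f y = w" by (rule preim)
    have "y \<in> perp P L a" if "a \<in> A" for a
    proof -
      have "w \<in> perp P' L' (f a)" using w that unfolding setperp_def by blast
      then have "T.col (f a) (f y)" using T.perp_iff fP A that y by blast
      then have "S.col a y" using col_iff A that y by blast
      then show ?thesis using S.perp_iff A that by blast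
    qed
    then have "y \<in> setperp P L A" using y unfolding setperp_def by blast
    then show "w \<in> f ` setperp P L A" using y by blast
  qed
next
  show "f ` setperp P L A \<subseteq> setperp P' L' (f ` A)"
  proof
    fix w assume "w \<in> f ` setperp P L A"
    then obtain y where y: "y \<in> setperp P L A" "w = f y" by blast
    have yP: "y \<in> P" using y unfolding setperp_def by blast
    have "w \<in> perp P' L' (f a)" if "a \<in> A" for a
    proof -
      have "y \<in> perp P L a" using y that unfolding setperp_def by blast
      then have "S.col a y" using S.perp_iff A that by blast
      then have "T.col (f a) (f y)" using col_iff A that yP by blast
      then show ?thesis using T.perp_iff fP A that y by blast
    qed
    moreover have "w \<in> P'" using y(2) yP fP by blast
    ultimately show "w \<in> setperp P' L' (f ` A)" unfolding setperp_def by blast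
  qed
qed

lemma card_setperp: assumes "A \<subseteq> P" shows "card (setperp P' L' (f ` A)) = card (setperp P L A)"
proof -
  have "setperp P L A \<subseteq> P" unfolding setperp_def by blast
  then have "inj_on f (setperp P L A)" using inj inj_on_subset by blast
  then show ?thesis using setperp_tr[OF assms] card_image by metis
qed

lemma bP_I: assumes "a \<in> P" "T.col (f a) w" shows "(a, w) \<in> bigP P P' L' f"
proof -
  have "w \<in> P'" using assms(2) T.col_P by blast
  moreover have "w \<in> perp P' L' (f a)" using T.perp_iff fP[OF assms(1)] assms(2) by blast
  ultimately show ?thesis using assms(1) unfolding bigP_def by simp
qed

lemma bL_I:
  assumes "(x, p) \<in> bigP P P' L' f" "(z, q) \<in> bigP P P' L' f" "(t, r) \<in> bigP P P' L' f"
    "x \<noteq> z" "z \<noteq> t" "x \<noteq> t" "{x, z, t} \<in> L \<or> complete_triad P L {x, z, t}"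
    "{p, q, r} = setperp P' L' (f ` {x, z, t})" "p \<noteq> q" "q \<noteq> r" "p \<noteq> r"
  shows "{(x,p),(z,q),(t,r)} \<in> bigL P L P' L' f"
  unfolding bigL_def mem_Collect_eq
  apply (rule exI[of _ x])
  apply (rule exI[of _ p])
  apply (rule exI[of _ z])
  apply (rule exI[of _ q])
  apply (rule exI[of _ t])
  apply (rule exI[of _ r])
  using assms by simp

lemma scol:
  assumes x: "x \<in> P" and z: "z \<in> P" and xz: "f x \<noteq> f z" and pq: "p \<noteq> q"
    and c: "T.col (f x) p" "T.col (f z) p" "T.col (f x) q" "T.col (f z) q"
  shows "collinear (bigL P L P' L' f) (x, p) (z, q)"
proof -
  have xz': "x \<noteq> z" using xz by blast
  have X: "f x \<in> P'" and Z: "f z \<in> P'" using fP x z by blast+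
  have bx: "(x,p) \<in> bigP P P' L' f" by (rule bP_I[OF x c(1)])
  have bz: "(z,q) \<in> bigP P P' L' f" by (rule bP_I[OF z c(4)])
  show ?thesis
  proof (cases "T.col (f x) (f z)")
    case True
    obtain l' where l': "l' \<in> L'" "f x \<in> l'" "f z \<in> l'" using True by (rule T.col_line)
    obtain T0 where T0: "l' = {f x, f z, T0}" "T0 \<noteq> f x" "T0 \<noteq> f z" by (rule T.third_pt[OF l' xz])
    have T0P: "T0 \<in> P'" using T0(1) T.line_sub[OF l'(1)] by blast
    obtain t where t: "t \<in> P" "f t = T0" by (rule preim[OF T0P])
    have "l' \<in> (\<lambda>l. f ` l) ` L" using limg l'(1) by simp
    then obtain l where l: "l' = f ` l" "l \<in> L" by (rule imageE)
    have "f ` {x,z,t} = f ` l" using l(1) T0(1) t(2) by simp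
    moreover have "{x,z,t} \<subseteq> P" using x z t(1) by simp
    ultimately have lxzt: "{x,z,t} = l" using inj_on_image_eq_iff[OF inj _ S.line_sub[OF l(2)]] by blast
    have sp: "setperp P' L' (f ` {x,z,t}) = l'" using T.setperp_line[OF l'(1)] l(1) lxzt by simp
    have pl: "p \<in> l'" using T.tri[OF l'(1) l'(2) l'(3) xz] c(1,2) T.col_sym by blast
    have ql: "q \<in> l'" using T.tri[OF l'(1) l'(2) l'(3) xz] c(3,4) T.col_sym by blast
    obtain r where r: "l' = {p,q,r}" "r \<noteq> p" "r \<noteq> q" by (rule T.third_pt[OF l'(1) pl ql pq])
    have rl: "r \<in> l'" using r(1) by simp
    have Tl: "T0 \<in> l'" using T0(1) by simp
    have bt: "(t,r) \<in> bigP P P' L' f" using bP_I[OF t(1)] T.col_I[OF l'(1) Tl rl] t(2) by simp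
    have zt: "z \<noteq> t" using T0(3) t(2) by blast
    have xt: "x \<noteq> t" using T0(2) t(2) by blast
    have "{(x,p),(z,q),(t,r)} \<in> bigL P L P' L' f"
      by (rule bL_I[OF bx bz bt xz' zt xt]) (use lxzt l(2) sp r pq in auto)
    then show ?thesis unfolding collinear_def by blast
  next
    case False
    obtain T0 where T0: "T0 \<in> P'" "\<not> T.col (f x) T0" "\<not> T.col (f z) T0"
      and cen: "\<forall>w. T.col (f x) w \<and> T.col (f z) w \<longrightarrow> T.col T0 w"
      using T.regular[OF X Z False] by blast
    obtain a b cc where abc: "a\<noteq>b" "b\<noteq>cc" "a\<noteq>cc"
      and ch: "\<And>w. (T.col (f x) w \<and> T.col (f z) w) \<longleftrightarrow> (w = a \<or> w = b \<or> w = cc)"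
      using T.perp2_3[OF X Z False] by blast
    obtain t where t: "t \<in> P" "f t = T0" by (rule preim[OF T0(1)])
    have fxzt: "f ` {x,z,t} = {f x, f z, T0}" using t by simp
    have sp: "setperp P' L' {f x, f z, T0} = {a,b,cc}"
    proof
      show "setperp P' L' {f x, f z, T0} \<subseteq> {a,b,cc}"
      proof
        fix w assume "w \<in> setperp P' L' {f x, f z, T0}"
        then have "w \<in> perp P' L' (f x)" "w \<in> perp P' L' (f z)" unfolding setperp_def by auto
        then have "T.col (f x) w" "T.col (f z) w" using T.perp_iff X Z by blast+
        then show "w \<in> {a,b,cc}" using ch by blast
      qed
    next
      show "{a,b,cc} \<subseteq> setperp P' L' {f x, f z, T0}"
      proof
        fix w assume "w \<in> {a,b,cc}"
        then have w: "T.col (f x) w" "T.col (f z) w" using ch by blast+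
        then have "T.col T0 w" using cen by blast
        then have "w \<in> perp P' L' (f x)" "w \<in> perp P' L' (f z)" "w \<in> perp P' L' T0"
          using w T.perp_iff X Z T0(1) by blast+
        moreover have "w \<in> P'" using w T.col_P by blast
        ultimately show "w \<in> setperp P' L' {f x, f z, T0}" unfolding setperp_def by blast
      qed
    qed
    have c3: "card {a,b,cc} = 3" using abc by simp
    have pin: "p \<in> {a,b,cc}" "q \<in> {a,b,cc}" using ch c by blast+
    obtain r where r: "{a,b,cc} = {p,q,r}" "r \<noteq> p" "r \<noteq> q" using rest3[OF c3 pin pq] by blast
    have rin: "r \<in> {a,b,cc}" using r(1) by simp
    have rc: "T.col (f x) r" "T.col (f z) r" using ch rin by blast+
    have bt: "(t,r) \<in> bigP P P' L' f" using bP_I[OF t(1)] cen rc t(2) by simp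
    have xT: "f x \<noteq> T0" using T0(2) T.col_refl[OF X] by blast
    have zT: "f z \<noteq> T0" using T0(3) T.col_refl[OF Z] by blast
    have zt: "z \<noteq> t" using zT t(2) by blast
    have xt: "x \<noteq> t" using xT t(2) by blast
    have sub: "{x,z,t} \<subseteq> P" using x z t(1) by simp
    have ct: "card {x,z,t} = 3" using xz' zt xt by simp
    have nc: "\<not> S.col x z" "\<not> S.col x t" "\<not> S.col z t"
      using col_iff x z t False T0 by auto
    have tri: "triad P L {x,z,t}"
      unfolding triad_def using sub ct nc S.col_sym by blast
    have "card (setperp P L {x,z,t}) = 3"
      using card_setperp[OF sub] fxzt sp c3 by simp
    then have ctri: "complete_triad P L {x,z,t}" using tri unfolding complete_triad_def by simp
    have "{(x,p),(z,q),(t,r)} \<in> bigL P L P' L' f"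
      by (rule bL_I[OF bx bz bt xz' zt xt]) (use ctri fxzt sp r pq in auto)
    then show ?thesis unfolding collinear_def by blast
  qed
qed

lemma gamma:
  assumes x: "x \<in> P" and y: "y \<in> P" and cu: "T.col (f x) u" and cv: "T.col (f y) v"
    and nu: "\<not> T.col (f y) u" and nv: "\<not> T.col (f x) v"
    and W: "T.col (f x) W" "T.col (f y) W"
  shows "\<exists>z. (z, W) \<in> setperp (bigP P P' L' f) (bigL P L P' L' f) {(x,u),(y,v)}"
proof -
  have uP: "u \<in> P'" using cu T.col_P by blast
  have vP: "v \<in> P'" using cv T.col_P by blast
  have WP: "W \<in> P'" using W T.col_P by blast
  obtain Z where Z: "T.col Z u" "T.col Z v" "T.col Z W" using T.center_all[OF uP vP WP] by blast
  have ZP: "Z \<in> P'" using Z T.col_P by blast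
  obtain z where z: "z \<in> P" "f z = Z" by (rule preim[OF ZP])
  have bz: "(z, W) \<in> bigP P P' L' f" using bP_I[OF z(1)] Z(3) z(2) by simp
  have xz: "f x \<noteq> f z" using nv Z(2) z(2) by auto
  have yz: "f y \<noteq> f z" using nu Z(1) z(2) by auto
  have uW: "u \<noteq> W" using nu W(2) by auto
  have vW: "v \<noteq> W" using nv W(1) by auto
  have c1: "collinear (bigL P L P' L' f) (x, u) (z, W)"
    by (rule scol[OF x z(1) xz uW cu _ W(1)]) (use Z z(2) T.col_sym in auto)
  have c2: "collinear (bigL P L P' L' f) (y, v) (z, W)"
    by (rule scol[OF y z(1) yz vW cv _ W(2)]) (use Z z(2) T.col_sym in auto)
  have "(z, W) \<in> perp (bigP P P' L' f) (bigL P L P' L' f) (x,u)"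
    using bz c1 unfolding perp_def by blast
  moreover have "(z, W) \<in> perp (bigP P P' L' f) (bigL P L P' L' f) (y,v)"
    using bz c2 unfolding perp_def by blast
  ultimately have "(z, W) \<in> setperp (bigP P P' L' f) (bigL P L P' L' f) {(x,u),(y,v)}"
    using bz unfolding setperp_def by blast
  then show ?thesis by blast
qed

lemma main:
  assumes "(x, u') \<in> bigP P P' L' f" and "(y, v') \<in> bigP P P' L' f"
    and "x \<noteq> y" and "u' \<notin> perp P' L' (f y)" and "v' \<notin> perp P' L' (f x)"
  shows "card (setperp (bigP P P' L' f) (bigL P L P' L' f) {(x, u'), (y, v')}) \<ge> 3"
proof -
  have x: "x \<in> P" and uP: "u' \<in> perp P' L' (f x)" using assms(1) unfolding bigP_def by auto
  have y: "y \<in> P" and vP: "v' \<in> perp P' L' (f y)" using assms(2) unfolding bigP_def by auto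
  have X: "f x \<in> P'" and Y: "f y \<in> P'" using fP x y by blast+
  have cu: "T.col (f x) u'" using uP T.perp_iff X by blast
  have cv: "T.col (f y) v'" using vP T.perp_iff Y by blast
  have nu: "\<not> T.col (f y) u'" using assms(4) T.perp_iff Y by blast
  have nv: "\<not> T.col (f x) v'" using assms(5) T.perp_iff X by blast
  have XY: "f x \<noteq> f y" using inj_onD[OF inj _ x y] assms(3) by blast
  obtain a b c where abc: "a\<noteq>b" "b\<noteq>c" "a\<noteq>c" and
    ca: "T.col (f x) a" "T.col (f y) a" and cb: "T.col (f x) b" "T.col (f y) b"
    and cc: "T.col (f x) c" "T.col (f y) c"
    using T.three_common[OF X Y XY] by blast
  obtain za where za: "(za, a) \<in> setperp (bigP P P' L' f) (bigL P L P' L' f) {(x,u'),(y,v')}"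
    using gamma[OF x y cu cv nu nv ca] by blast
  obtain zb where zb: "(zb, b) \<in> setperp (bigP P P' L' f) (bigL P L P' L' f) {(x,u'),(y,v')}"
    using gamma[OF x y cu cv nu nv cb] by blast
  obtain zc where zc: "(zc, c) \<in> setperp (bigP P P' L' f) (bigL P L P' L' f) {(x,u'),(y,v')}"
    using gamma[OF x y cu cv nu nv cc] by blast
  have fin: "finite (bigP P P' L' f)"
  proof (rule finite_subset)
    show "bigP P P' L' f \<subseteq> P \<times> P'" unfolding bigP_def by auto
    show "finite (P \<times> P')" using S.finite_P[OF x] T.finite_P[OF X] by simp
  qed
  have fin2: "finite (setperp (bigP P P' L' f) (bigL P L P' L' f) {(x,u'),(y,v')})"
    by (rule finite_subset[OF _ fin]) (auto simp: setperp_def)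
  have sub: "{(za,a),(zb,b),(zc,c)} \<subseteq> setperp (bigP P P' L' f) (bigL P L P' L' f) {(x,u'),(y,v')}"
    using za zb zc by simp
  have "card {(za,a),(zb,b),(zc,c)} = 3" using abc by simp
  then show ?thesis using card_mono[OF fin2 sub] by simp
qed

end
theorem lemma3p2:
  fixes P :: "'a set" and L :: "'a set set"
    and P' :: "'b set" and L' :: "'b set set" and f :: "'a \<Rightarrow> 'b"
    and x y :: 'a and u' v' :: 'b
  assumes "GQ22 P L" and "GQ22 P' L'" and "isomorphism P L P' L' f"
    and "(x, u') \<in> bigP P P' L' f" and "(y, v') \<in> bigP P P' L' f"
    and "x \<noteq> y" and "u' \<noteq> v'"
    and "u' \<notin> perp P' L' (f y)" and "v' \<notin> perp P' L' (f x)"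
  shows "card (setperp (bigP P P' L' f) (bigL P L P' L' f) {(x, u'), (y, v')}) \<ge> 3"
proof -
  interpret two P L P' L' f
    using assms(1-3) by (simp add: two_def two_axioms_def gq_def)
  show ?thesis using main[OF assms(4,5,6,8,9)] .
qed

end
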